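(* Let $E_3^*$ be the greedy exponential-progression-free set defined in the context. Then the exponential density of $\mathbb{N}\setminus E_3^*$ exists and equals $1/4$, i.e. $$\lim_{n\to\infty}\frac{\log\big(\#\{a\in \mathbb{N}\setminus E_3^* : a\le n\}\big)}{\log n} = \frac14.$$
   Context: An exponential progression is a triple $x, x^n, x^{n^2}$ with natural numbers $x, n > 1$. $E_3^*$ is constructed greedily: $1\in E_3^*$, and for $k=2,3,\dots$ in increasing order, $k$ is put into $E_3^*$ unless there are natural numbers $x,n>1$ with $x, x^n\in E_3^*$ and $k=x^{n^2}$. The upper exponential density of $A\subseteq\mathbb{N}$ is $\overline{e}(A)=\limsup_{n\to\infty}\frac{1}{\log n}\log\big(\#\{a\in A: a\le n\}\big)$; the lower exponential density uses $\liminf$, and the exponential density $e(A)$ is the common value when they agree. *)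

theory Defs
  imports "HOL-Analysis.Analysis"
begin

text \<open>Greedy exponential-progression-free set E_3^* (over positive naturals).
  inE k decides k \<in> E_3^*: 1 is in; k \<ge> 2 is in unless k = x^(n^2) for some
  x, n > 1 with x and x^n already in the set. The bounds x < k and n < k are
  implied by k = x^(n^2) with x, n > 1, and ensure termination.\<close>

function inE :: "nat \<Rightarrow> bool" where
  "inE k = (if k = 0 then False
            else if k = 1 then True
            else \<not> (\<exists>x n. x < k \<and> n < k \<and> x > 1 \<and> n > 1 \<and> k = x ^ (n^2)
                        \<and> (if x < k then inE x else False)
                        \<and> (if x ^ n < k then inE (x ^ n) else False)))"
  by auto
termination
  by (relation "Wellfounded.measure id") auto

definition E3star :: "nat set" where
  "E3star = {k. inE k}"

end

theory Submission
  imports Defs "HOL-Real_Asymp.Real_Asymp"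
begin

declare inE.simps[simp del]

lemma notE_char:
  assumes "\<not> inE k" "k \<ge> 1"
  shows "\<exists>x n. x > 1 \<and> n > 1 \<and> k = x ^ (n^2)"
  using assms by (subst (asm) inE.simps) (auto split: if_splits)

lemma inE_of:
  assumes "k \<ge> 2" "\<not> (\<exists>x n. x > 1 \<and> n > 1 \<and> k = x ^ (n^2))"
  shows "inE k"
  using assms by (subst inE.simps) auto

lemma notE_of:
  assumes "x > (1::nat)" "n > 1" "inE x" "inE (x^n)"
  shows "\<not> inE (x ^ (n^2))"
proof -
  have nn: "n < n^2" using assms(2) by (simp add: power2_eq_square)
  have "x^n < x^(n^2)" using nn assms(1) by (simp add: power_strict_increasing)
  moreover have "x < x^n" using assms by (metis power_one_right power_strict_increasing)
  moreover have "n < 2^n" by (rule less_exp)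
  moreover have "2^n \<le> x^n" using assms(1) by (simp add: power_mono)
  ultimately have key: "x < x^(n^2) \<and> n < x^(n^2) \<and> x > 1 \<and> n > 1 \<and> x^(n^2) = x^(n^2) \<and> inE x \<and> inE (x^n) \<and> x^n < x^(n^2)"
    using assms by linarith
  then have "x^(n^2) \<noteq> 0" "x^(n^2) \<noteq> 1" by auto
  then show ?thesis using key
    by (subst inE.simps) force
qed

lemma pow_ge4:
  assumes "(y::nat) > 1" "n > 1" "k = y^(n^2)" "even k"
  shows "16 dvd k"
proof -
  have "4 \<le> n^2" using assms(2) proof -
    have "2*2 \<le> n*n" using assms(2) by (intro mult_le_mono) auto
    then show ?thesis by (simp add: power2_eq_square)
  qed
  have "even y" using assms by simp
  then have "2^(n^2) dvd k" using assms(3) by (simp add: dvd_power_same)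
  moreover have "(16::nat) dvd 2^(n^2)" using \<open>4 \<le> n^2\<close>
    proof -
    have "(2::nat)^4 dvd 2^(n^2)" using \<open>4 \<le> n^2\<close> by (rule le_imp_power_dvd)
    then show ?thesis by simp
  qed
  ultimately show ?thesis by (meson dvd_trans)
qed


lemma good1: assumes "odd m" shows "inE (2*m)"
proof (rule inE_of)
  show "2 \<le> 2*m" using assms by (cases m) auto
  show "\<not> (\<exists>x n. x > 1 \<and> n > 1 \<and> 2*m = x ^ (n^2))"
  proof
    assume "\<exists>x n. x > 1 \<and> n > 1 \<and> 2*m = x ^ (n^2)"
    then obtain x n where "x > 1" "n > 1" "2*m = x^(n^2)" by blast
    have ev: "even (x^(n^2))" using \<open>2*m = x^(n^2)\<close> by (metis dvd_triv_left)
    have "16 dvd x^(n^2)" by (rule pow_ge4[OF \<open>x > 1\<close> \<open>n > 1\<close> refl ev])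
    then have "16 dvd 2*m" using \<open>2*m = x^(n^2)\<close> by simp
    then have "2 dvd m" by presburger
    then show False using assms by simp
  qed
qed

lemma good2: assumes "odd m" shows "inE ((2*m)^2)"
proof (rule inE_of)
  show "2 \<le> (2*m)^2" using assms by (cases m) (auto simp: power2_eq_square)
  show "\<not> (\<exists>x n. x > 1 \<and> n > 1 \<and> (2*m)^2 = x ^ (n^2))"
  proof
    assume "\<exists>x n. x > 1 \<and> n > 1 \<and> (2*m)^2 = x ^ (n^2)"
    then obtain x n where "x > 1" "n > 1" "(2*m)^2 = x^(n^2)" by blast
    have ev: "even (x^(n^2))" using \<open>(2*m)^2 = x^(n^2)\<close> by (metis dvd_triv_left power2_eq_square mult.assoc)
    have "16 dvd x^(n^2)" by (rule pow_ge4[OF \<open>x > 1\<close> \<open>n > 1\<close> refl ev])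
    then have "16 dvd (2*m)^2" using \<open>(2*m)^2 = x^(n^2)\<close> by simp
    then have "4 dvd m*m" by (simp add: power2_eq_square)
    then have "even (m*m)" by (meson dvd_trans even_numeral)
    then show False using assms by simp
  qed
qed

lemma bad: assumes "odd m" shows "\<not> inE ((2*m)^4)"
proof -
  have "m \<ge> 1" using assms by (cases m) auto
  then have "\<not> inE ((2*m)^(2^2))" using notE_of[of "2*m" 2] good1[OF assms] good2[OF assms] by auto
  then show ?thesis by simp
qed

definition C :: "nat \<Rightarrow> nat set" where
  "C N = {a::nat. 1 \<le> a \<and> a \<le> N \<and> a \<notin> E3star}"

lemma C_upper_sub:
  "C N \<subseteq> (\<lambda>(x,j). x^j) ` ({..nat \<lfloor>real N powr (1/4)\<rfloor>} \<times> {..nat \<lfloor>log 2 (real N)\<rfloor>})"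
proof
  fix a assume "a \<in> C N"
  then have a: "1 \<le> a" "a \<le> N" "\<not> inE a" by (auto simp: C_def E3star_def)
  then obtain x n where xn: "x > 1" "n > 1" "a = x^(n^2)" using notE_char by blast
  have "4 \<le> n^2" using xn(2) proof -
    have "2*2 \<le> n*n" using xn(2) by (intro mult_le_mono) auto
    then show ?thesis by (simp add: power2_eq_square)
  qed
  have "x^4 \<le> x^(n^2)" using \<open>4 \<le> n^2\<close> xn(1) by (simp add: power_increasing)
  then have x4: "real x ^ 4 \<le> real N" using a xn by (metis of_nat_le_iff of_nat_power order_trans)
  have "real x \<le> real N powr (1/4)"
  proof (rule ccontr)
    assume "\<not> ?thesis"
    then have "(real N powr (1/4))^4 < real x ^ 4"
      by (intro power_strict_mono) auto
    moreover have "(real N powr (1/4))^4 = real N"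
      by (cases "N = 0") (simp_all add: powr_power)
    ultimately show False using x4 by simp
  qed
  then have "x \<le> nat \<lfloor>real N powr (1/4)\<rfloor>" by (simp add: le_nat_floor)
  have "2^(n^2) \<le> x^(n^2)" using xn(1) by (simp add: power_mono)
  then have "real (2^(n^2)) \<le> real N" using a xn by linarith
  then have "log 2 (2^(n^2)) \<le> log 2 (real N)"
    using a(1,2) by (subst log_le_cancel_iff) auto
  then have "real (n^2) \<le> log 2 (real N)" by (simp add: log_nat_power)
  then have "n^2 \<le> nat \<lfloor>log 2 (real N)\<rfloor>" by (simp add: le_nat_floor)
  then show "a \<in> (\<lambda>(x,j). x^j) ` ({..nat \<lfloor>real N powr (1/4)\<rfloor>} \<times> {..nat \<lfloor>log 2 (real N)\<rfloor>})"
    using xn \<open>x \<le> _\<close> by (auto intro!: image_eqI[of _ _ "(x, n^2)"])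
qed


lemma C_upper_card:
  assumes "N \<ge> 1"
  shows "real (card (C N)) \<le> (real N powr (1/4) + 1) * (log 2 (real N) + 1)"
proof -
  let ?r = "nat \<lfloor>real N powr (1/4)\<rfloor>" and ?L = "nat \<lfloor>log 2 (real N)\<rfloor>"
  have "card (C N) \<le> card ((\<lambda>(x,j). x^j) ` ({..?r} \<times> {..?L}))"
    by (rule card_mono[OF _ C_upper_sub]) auto
  also have "\<dots> \<le> card ({..?r} \<times> {..?L})" by (rule card_image_le) auto
  also have "\<dots> = (?r + 1) * (?L + 1)" by (simp add: card_cartesian_product)
  finally have "real (card (C N)) \<le> real ((?r + 1) * (?L + 1))" by linarith
  also have "\<dots> = (real ?r + 1) * (real ?L + 1)" by (simp only: of_nat_mult of_nat_add of_nat_1)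
  also have "\<dots> \<le> (real N powr (1/4) + 1) * (log 2 (real N) + 1)"
  proof (intro mult_mono)
    have "0 \<le> real N powr (1/4)" by simp
    then show "real ?r + 1 \<le> real N powr (1/4) + 1" by linarith
    have "0 \<le> log 2 (real N)" using assms by simp
    then show "real ?L + 1 \<le> log 2 (real N) + 1" by linarith
    show "0 \<le> real N powr (1/4) + 1" by (simp add: add_nonneg_nonneg)
    show "0 \<le> real ?L + 1" by simp
  qed
  finally show ?thesis .
qed

lemma C_lower_card:
  "real (card (C N)) \<ge> real N powr (1/4) / 4 - 1"
proof -
  define p where "p = real N powr (1/4)"
  define K where "K = nat \<lfloor>p / 4\<rfloor>"
  have p0: "p \<ge> 0" by (simp add: p_def)
  have pN: "p^4 = real N" unfolding p_def by (cases "N = 0") (simp_all add: powr_power)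
  have sub: "(\<lambda>i. (2*(2*i+1))^4) ` {..<K} \<subseteq> C N"
  proof safe
    fix i assume "i < K"
    then have "real i + 1 \<le> p / 4" unfolding K_def using p0 by linarith
    then have "real (2*(2*i+1)) < p" by simp
    then have "real (2*(2*i+1)) ^ 4 < p ^ 4" by (intro power_strict_mono) auto
    then have "real ((2*(2*i+1))^4) < real N" using pN by simp
    then have le: "(2*(2*i+1))^4 \<le> N" by linarith
    have "\<not> inE ((2*(2*i+1))^4)" by (rule bad) simp
    then show "(2*(2*i+1))^4 \<in> C N" using le by (simp add: C_def E3star_def)
  qed
  have inj: "inj_on (\<lambda>i::nat. (2*(2*i+1))^4) {..<K}"
    by (rule inj_onI) (simp add: power_eq_iff_eq_base)
  have "K = card ((\<lambda>i. (2*(2*i+1))^4) ` {..<K})" using card_image[OF inj] by simp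
  also have "\<dots> \<le> card (C N)"
    by (rule card_mono[OF _ sub]) (rule finite_subset[OF C_upper_sub], auto)
  finally have "real K \<le> real (card (C N))" by simp
  moreover have "real K \<ge> p / 4 - 1" unfolding K_def using p0 by linarith
  ultimately show ?thesis unfolding p_def by linarith
qed

lemma lim_low: "(\<lambda>n::nat. ln (real n powr (1/4) / 8) / ln (real n)) \<longlonglongrightarrow> 1/4"
  by real_asymp

lemma lim_up: "(\<lambda>n::nat. ln ((real n powr (1/4) + 1) * (log 2 (real n) + 1)) / ln (real n)) \<longlonglongrightarrow> 1/4"
  by real_asymp

lemma ev8: "eventually (\<lambda>n::nat. real n powr (1/4) \<ge> 8) sequentially"
  by real_asymp


theorem mainTheorem5:
  shows "(\<lambda>n::nat. ln (real (card {a::nat. 1 \<le> a \<and> a \<le> n \<and> a \<notin> E3star})) / ln (real n))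
           \<longlonglongrightarrow> 1 / 4"
proof -
  have bounds: "ln (real n powr (1/4) / 8) / ln (real n) \<le> ln (real (card (C n))) / ln (real n) \<and>
        ln (real (card (C n))) / ln (real n) \<le> ln ((real n powr (1/4) + 1) * (log 2 (real n) + 1)) / ln (real n)"
    if p8: "real n powr (1/4) \<ge> 8" for n :: nat
  proof -
    have "n > 1"
    proof (rule ccontr)
      assume "\<not> n > 1"
      then have "n = 0 \<or> n = 1" by auto
      then show False using p8 by auto
    qed
    then have lnpos: "ln (real n) > 0" by simp
    have c1: "real (card (C n)) \<ge> real n powr (1/4) / 8"
      using C_lower_card[of n] p8 by linarith
    have cpos: "real (card (C n)) > 0" using c1 p8 by linarith
    have "ln (real n powr (1/4) / 8) \<le> ln (real (card (C n)))"
      using c1 p8 \<open>n > 1\<close> by (subst ln_le_cancel_iff) auto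
    moreover have "ln (real (card (C n))) \<le> ln ((real n powr (1/4) + 1) * (log 2 (real n) + 1))"
      using C_upper_card[of n] \<open>n > 1\<close> cpos by (subst ln_le_cancel_iff) auto
    ultimately show ?thesis using lnpos by (auto intro: divide_right_mono)
  qed
  have "(\<lambda>n::nat. ln (real (card (C n))) / ln (real n)) \<longlonglongrightarrow> 1 / 4"
  proof (rule tendsto_sandwich[OF _ _ lim_low lim_up])
    show "\<forall>\<^sub>F n in sequentially. ln (real n powr (1/4) / 8) / ln (real n) \<le> ln (real (card (C n))) / ln (real n)"
      using ev8 by eventually_elim (use bounds in blast)
    show "\<forall>\<^sub>F n in sequentially. ln (real (card (C n))) / ln (real n) \<le> ln ((real n powr (1/4) + 1) * (log 2 (real n) + 1)) / ln (real n)"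
      using ev8 by eventually_elim (use bounds in blast)
  qed
  then show ?thesis by (simp add: C_def)
qed

end
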